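(* For each integer $k\ge 2$, the graph $\Theta(2,2,2k)$ is chromatic-choosable, but it is not weakly enumeratively chromatic-choosable.
   Context: $\Theta(l_1,l_2,l_3)$ denotes the graph consisting of two end vertices joined by three internally disjoint paths of lengths $l_1,l_2,l_3$. A graph $G$ is chromatic-choosable if its list chromatic number $\chi_\ell(G)$ equals its chromatic number $\chi(G)$. For a list assignment $L$, $P(G,L)$ is the number of proper $L$-colorings; an $m$-assignment assigns lists of size $m$ to every vertex; $P(G,m)$ is the chromatic polynomial and $P_\ell(G,m)$, the list color function, is the minimum of $P(G,L)$ over all $m$-assignments $L$. A graph $G$ is weakly enumeratively chromatic-choosable if $P_\ell(G,\chi(G))=P(G,\chi(G))$. *)

theory Defs
  imports "HOL-Library.FuncSet"
begin

text \<open>Finite simple graphs are given by a vertex set V and a set E of edges,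
each edge being a 2-element subset of V. Colours are natural numbers.\<close>

definition proper_coloring :: "'a set \<Rightarrow> 'a set set \<Rightarrow> ('a \<Rightarrow> nat) \<Rightarrow> bool" where
  "proper_coloring V E f \<longleftrightarrow> (\<forall>e\<in>E. \<forall>x\<in>e. \<forall>y\<in>e. x \<noteq> y \<longrightarrow> f x \<noteq> f y)"

definition chromatic_number :: "'a set \<Rightarrow> 'a set set \<Rightarrow> nat" where
  "chromatic_number V E = (LEAST m. \<exists>f. f ` V \<subseteq> {..<m} \<and> proper_coloring V E f)"

definition m_assignment :: "'a set \<Rightarrow> nat \<Rightarrow> ('a \<Rightarrow> nat set) \<Rightarrow> bool" where
  "m_assignment V m L \<longleftrightarrow> (\<forall>v\<in>V. finite (L v) \<and> card (L v) = m)"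

definition L_colorings :: "'a set \<Rightarrow> 'a set set \<Rightarrow> ('a \<Rightarrow> nat set) \<Rightarrow> ('a \<Rightarrow> nat) set" where
  "L_colorings V E L = {f \<in> PiE V L. proper_coloring V E f}"

definition P_list :: "'a set \<Rightarrow> 'a set set \<Rightarrow> ('a \<Rightarrow> nat set) \<Rightarrow> nat" where
  "P_list V E L = card (L_colorings V E L)"

definition choosable :: "'a set \<Rightarrow> 'a set set \<Rightarrow> nat \<Rightarrow> bool" where
  "choosable V E m \<longleftrightarrow> (\<forall>L. m_assignment V m L \<longrightarrow> L_colorings V E L \<noteq> {})"

definition list_chromatic_number :: "'a set \<Rightarrow> 'a set set \<Rightarrow> nat" where
  "list_chromatic_number V E = (LEAST m. choosable V E m)"

definition chrom_poly :: "'a set \<Rightarrow> 'a set set \<Rightarrow> nat \<Rightarrow> nat" where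
  "chrom_poly V E m = P_list V E (\<lambda>_. {..<m})"

definition list_color_function :: "'a set \<Rightarrow> 'a set set \<Rightarrow> nat \<Rightarrow> nat" where
  "list_color_function V E m = (LEAST p. \<exists>L. m_assignment V m L \<and> p = P_list V E L)"

definition chromatic_choosable :: "'a set \<Rightarrow> 'a set set \<Rightarrow> bool" where
  "chromatic_choosable V E \<longleftrightarrow> list_chromatic_number V E = chromatic_number V E"

definition weakly_enum_chromatic_choosable :: "'a set \<Rightarrow> 'a set set \<Rightarrow> bool" where
  "weakly_enum_chromatic_choosable V E \<longleftrightarrow>
     list_color_function V E (chromatic_number V E) = chrom_poly V E (chromatic_number V E)"

text \<open>Theta graphs. The end vertices are (0,0) and (0,1); the internal vertices of
the i-th path (i = 1,2,3) of length l are (i,1),...,(i,l-1).\<close>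
definition path_vx :: "nat \<Rightarrow> nat \<Rightarrow> nat \<Rightarrow> nat \<times> nat" where
  "path_vx l i j = (if j = 0 then (0,0) else if j = l then (0,1) else (i,j))"

definition path_verts :: "nat \<Rightarrow> nat \<Rightarrow> (nat \<times> nat) set" where
  "path_verts l i = {path_vx l i j | j. j \<le> l}"

definition path_edges :: "nat \<Rightarrow> nat \<Rightarrow> (nat \<times> nat) set set" where
  "path_edges l i = {{path_vx l i j, path_vx l i (Suc j)} | j. j < l}"

definition theta_V :: "nat \<Rightarrow> nat \<Rightarrow> nat \<Rightarrow> (nat \<times> nat) set" where
  "theta_V l1 l2 l3 = path_verts l1 1 \<union> path_verts l2 2 \<union> path_verts l3 3"

definition theta_E :: "nat \<Rightarrow> nat \<Rightarrow> nat \<Rightarrow> (nat \<times> nat) set set" where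
  "theta_E l1 l2 l3 = path_edges l1 1 \<union> path_edges l2 2 \<union> path_edges l3 3"

end

theory Submission imports Defs begin

lemma theta_V_iff:
  assumes "n \<ge> 2"
  shows "x \<in> theta_V 2 2 n \<longleftrightarrow> x = (0,0) \<or> x = (0,1) \<or> x = (1,1) \<or> x = (2,1) \<or> (\<exists>j. 0 < j \<and> j < n \<and> x = (3,j))"
proof
  assume "x \<in> theta_V 2 2 n"
  then show "x = (0,0) \<or> x = (0,1) \<or> x = (1,1) \<or> x = (2,1) \<or> (\<exists>j. 0 < j \<and> j < n \<and> x = (3,j))"
    unfolding theta_V_def path_verts_def path_vx_def
    by (auto split: if_splits)
next
  assume h: "x = (0,0) \<or> x = (0,1) \<or> x = (1,1) \<or> x = (2,1) \<or> (\<exists>j. 0 < j \<and> j < n \<and> x = (3,j))"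
  have a: "path_vx 2 1 0 = (0,0)" "path_vx 2 1 2 = (0,1)" "path_vx 2 1 1 = (1,1)" "path_vx 2 2 1 = (2,1)"
    by (auto simp: path_vx_def)
  have b: "0 < j \<Longrightarrow> j < n \<Longrightarrow> path_vx n 3 j = (3,j)" for j by (auto simp: path_vx_def)
  have m: "\<And>l i j. j \<le> l \<Longrightarrow> path_vx l i j \<in> path_verts l i" unfolding path_verts_def by blast
  have "(0,0) \<in> path_verts 2 1" "(0,1) \<in> path_verts 2 1" "(1,1) \<in> path_verts 2 1" "(2,1) \<in> path_verts 2 2"
    using m[of 0 2 1] m[of 2 2 1] m[of 1 2 1] m[of 1 2 2] a by auto
  moreover have "(3,j) \<in> path_verts n 3" if "0 < j" "j < n" for j
    using m[of j n 3] b[OF that] that by auto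
  ultimately show "x \<in> theta_V 2 2 n"
    using h unfolding theta_V_def by blast
qed

lemma qdist: "j < n \<Longrightarrow> path_vx n 3 j \<noteq> path_vx n 3 (Suc j)"
  by (auto simp: path_vx_def)

lemma proper_theta:
  assumes "n \<ge> 2"
  shows "proper_coloring V (theta_E 2 2 n) f \<longleftrightarrow>
    f (0,0) \<noteq> f (1,1) \<and> f (1,1) \<noteq> f (0,1) \<and> f (0,0) \<noteq> f (2,1) \<and> f (2,1) \<noteq> f (0,1) \<and>
    (\<forall>j<n. f (path_vx n 3 j) \<noteq> f (path_vx n 3 (Suc j)))"
proof -
  have pe: "path_edges l i = (\<lambda>j. {path_vx l i j, path_vx l i (Suc j)}) ` {..<l}" for l i
    unfolding path_edges_def by blast
  have l2: "{..<(2::nat)} = {0, Suc 0}" by auto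
  have v: "path_vx 2 i 0 = (0,0)" "path_vx 2 i (Suc 0) = (i,1)" "path_vx 2 i (Suc (Suc 0)) = (0,1)" for i
    by (simp_all add: path_vx_def)
  have e: "theta_E 2 2 n = {{(0,0),(1,1)}, {(1,1),(0,1)}} \<union> {{(0,0),(2,1)}, {(2,1),(0,1)}} \<union>
      (\<lambda>j. {path_vx n 3 j, path_vx n 3 (Suc j)}) ` {..<n}"
    unfolding theta_E_def pe l2 image_insert image_empty v by simp
  have pp: "(\<forall>x\<in>{p,q}. \<forall>y\<in>{p,q}. x \<noteq> y \<longrightarrow> f x \<noteq> f y) \<longleftrightarrow> (p \<noteq> q \<longrightarrow> f p \<noteq> f q)" for p q :: "nat \<times> nat"
    by auto
  show ?thesis
    unfolding e proper_coloring_def ball_Un ball_simps pp lessThan_iff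
    using qdist by auto
qed

primrec Sreach :: "(nat \<Rightarrow> nat set) \<Rightarrow> nat \<Rightarrow> nat \<Rightarrow> nat set" where
  "Sreach Ls a 0 = {a}"
| "Sreach Ls a (Suc j) = {c \<in> Ls (Suc j). \<exists>d\<in>Sreach Ls a j. d \<noteq> c}"

lemma S_reach:
  "c \<in> Sreach Ls a j \<Longrightarrow> \<exists>g. g 0 = a \<and> g j = c \<and> (\<forall>i. 0 < i \<and> i \<le> j \<longrightarrow> g i \<in> Ls i) \<and> (\<forall>i<j. g i \<noteq> g (Suc i))"
proof (induction j arbitrary: c)
  case 0
  then show ?case by (intro exI[of _ "\<lambda>_. a"]) auto
next
  case (Suc j)
  then obtain d where d: "d \<in> Sreach Ls a j" "d \<noteq> c" "c \<in> Ls (Suc j)" by auto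
  from Suc.IH[OF d(1)] obtain g where g: "g 0 = a" "g j = d" "\<forall>i. 0 < i \<and> i \<le> j \<longrightarrow> g i \<in> Ls i"
    "\<forall>i<j. g i \<noteq> g (Suc i)" by blast
  show ?case
    apply (intro exI[of _ "g(Suc j := c)"])
    using g d by (auto simp: le_Suc_eq less_Suc_eq)
qed

lemma card2E: "finite A \<Longrightarrow> card A = 2 \<Longrightarrow> (\<And>x y. x \<noteq> y \<Longrightarrow> A = {x,y} \<Longrightarrow> P) \<Longrightarrow> P"
  by (metis card_2_iff)

lemma S_ne:
  assumes "\<forall>i. 0 < i \<and> i \<le> j \<longrightarrow> finite (Ls i) \<and> card (Ls i) = 2"
  shows "Sreach Ls a j \<noteq> {}"
  using assms
proof (induction j)
  case 0 then show ?case by simp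
next
  case (Suc j)
  then obtain d where d: "d \<in> Sreach Ls a j" by auto
  have "finite (Ls (Suc j))" "card (Ls (Suc j)) = 2" using Suc.prems by auto
  then obtain x y where "x \<noteq> y" "Ls (Suc j) = {x,y}" by (rule card2E)
  then show ?case using d by (cases "d = x") auto
qed

lemma S_two_mono:
  assumes "\<forall>i. 0 < i \<and> i \<le> m \<longrightarrow> finite (Ls i) \<and> card (Ls i) = 2"
    and "j \<le> m" and "x \<in> Sreach Ls a j" "y \<in> Sreach Ls a j" "x \<noteq> y"
  shows "\<exists>x' y'. x' \<in> Sreach Ls a m \<and> y' \<in> Sreach Ls a m \<and> x' \<noteq> y'"
  using assms(2)
proof (induction m rule: dec_induct)
  case base then show ?case using assms by blast
next
  case (step m)
  then obtain x' y' where xy: "x' \<in> Sreach Ls a m" "y' \<in> Sreach Ls a m" "x' \<noteq> y'" by blast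
  have "finite (Ls (Suc m))" "card (Ls (Suc m)) = 2" using assms(1) step by auto
  then obtain p q where pq: "p \<noteq> q" "Ls (Suc m) = {p,q}" by (rule card2E)
  have "\<exists>d\<in>Sreach Ls a m. d \<noteq> c" for c using xy by (cases "x' = c") auto
  then have "p \<in> Sreach Ls a (Suc m)" "q \<in> Sreach Ls a (Suc m)" using pq by auto
  then show ?case using pq(1) by blast
qed

lemma S_single:
  assumes "\<forall>i. 0 < i \<and> i \<le> m \<longrightarrow> finite (Ls i) \<and> card (Ls i) = 2"
    and "j \<le> m" and "Sreach Ls a m = {b}"
  shows "\<exists>x. Sreach Ls a j = {x}"
proof -
  have "Sreach Ls a j \<noteq> {}" using S_ne[of j Ls a] assms(1,2) by auto
  then obtain x where x: "x \<in> Sreach Ls a j" by auto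
  have "y = x" if yS: "y \<in> Sreach Ls a j" for y
  proof (rule ccontr)
    assume "y \<noteq> x"
    then obtain x' y' where "x' \<in> Sreach Ls a m" "y' \<in> Sreach Ls a m" "x' \<noteq> y'"
      using S_two_mono[OF assms(1) assms(2) x yS] \<open>y \<noteq> x\<close> by metis
    then show False using assms(3) by auto
  qed
  then show ?thesis using x by blast
qed

lemma S_swap:
  assumes fin: "\<forall>i. 0 < i \<and> i \<le> m \<longrightarrow> finite (Ls i) \<and> card (Ls i) = 2"
    and ne: "a1 \<noteq> a2" and s1: "Sreach Ls a1 m = {b1}" and s2: "Sreach Ls a2 m = {b2}"
  shows "j \<le> m \<Longrightarrow> Sreach Ls a1 j = (if even j then {a1} else {a2}) \<and> Sreach Ls a2 j = (if even j then {a2} else {a1})"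
proof (induction j)
  case 0 then show ?case by simp
next
  case (Suc j)
  obtain x y where xy: "Sreach Ls a1 j = {x}" "Sreach Ls a2 j = {y}" "x \<noteq> y"
    using Suc ne by (auto split: if_splits)
  obtain s where s: "Sreach Ls a1 (Suc j) = {s}" using S_single[OF fin Suc.prems s1] by blast
  obtain t where t: "Sreach Ls a2 (Suc j) = {t}" using S_single[OF fin Suc.prems s2] by blast
  have "finite (Ls (Suc j))" "card (Ls (Suc j)) = 2" using fin Suc.prems by auto
  then obtain p q where pq: "p \<noteq> q" "Ls (Suc j) = {p,q}" by (rule card2E)
  have e1: "Ls (Suc j) - {x} = {s}" using s xy by auto
  have e2: "Ls (Suc j) - {y} = {t}" using t xy by auto
  have "s = y \<and> t = x" using e1 e2 pq xy(3) by (auto simp: insert_Diff_if split: if_splits)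
  then show ?case using s t Suc xy by (auto split: if_splits)
qed

lemma pick:
  fixes u1 u2 w1 w2 a1 a2 b1 b2 :: nat
  assumes "u1 \<noteq> u2" "w1 \<noteq> w2" "a1 \<noteq> a2" "b1 \<noteq> b2"
    and Pf: "\<And>x y z. P x y \<Longrightarrow> P x z \<Longrightarrow> y = z"
    and Ps: "\<And>y z. P u1 y \<Longrightarrow> P u2 z \<Longrightarrow> y = u2 \<and> z = u1"
  shows "\<exists>\<alpha>\<in>{u1,u2}. \<exists>\<beta>\<in>{w1,w2}. \<not> P \<alpha> \<beta> \<and> (\<alpha> \<noteq> \<beta> \<longrightarrow> \<not> {a1,a2} \<subseteq> {\<alpha>,\<beta>}) \<and> (\<alpha> \<noteq> \<beta> \<longrightarrow> \<not> {b1,b2} \<subseteq> {\<alpha>,\<beta>})"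
proof -
  have "(\<not> P u1 w1 \<and> (u1 \<noteq> w1 \<longrightarrow> \<not> ({a1,a2} = {u1,w1})) \<and> (u1 \<noteq> w1 \<longrightarrow> \<not> ({b1,b2} = {u1,w1}))) \<or>
        (\<not> P u1 w2 \<and> (u1 \<noteq> w2 \<longrightarrow> \<not> ({a1,a2} = {u1,w2})) \<and> (u1 \<noteq> w2 \<longrightarrow> \<not> ({b1,b2} = {u1,w2}))) \<or>
        (\<not> P u2 w1 \<and> (u2 \<noteq> w1 \<longrightarrow> \<not> ({a1,a2} = {u2,w1})) \<and> (u2 \<noteq> w1 \<longrightarrow> \<not> ({b1,b2} = {u2,w1}))) \<or>
        (\<not> P u2 w2 \<and> (u2 \<noteq> w2 \<longrightarrow> \<not> ({a1,a2} = {u2,w2})) \<and> (u2 \<noteq> w2 \<longrightarrow> \<not> ({b1,b2} = {u2,w2})))"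
    using Pf[of u1 w1 w2] Pf[of u2 w1 w2] Ps[of w1 w1] Ps[of w1 w2] Ps[of w2 w1] Ps[of w2 w2] assms(1-4)
    by (simp add: doubleton_eq_iff) (smt (verit))
  moreover have sub: "\<And>x y. x \<noteq> y \<Longrightarrow> {x,y} \<subseteq> {\<alpha>,\<beta>} \<longleftrightarrow> {x,y} = {\<alpha>,\<beta>}" for \<alpha> \<beta> :: nat
    unfolding insert_subset doubleton_eq_iff by (simp only: insert_iff empty_iff) blast
  have key: "?thesis" if h: "\<alpha> \<in> {u1,u2}" "\<beta> \<in> {w1,w2}" "\<not> P \<alpha> \<beta>" "\<alpha> \<noteq> \<beta> \<longrightarrow> \<not> ({a1,a2} = {\<alpha>,\<beta>})"
    "\<alpha> \<noteq> \<beta> \<longrightarrow> \<not> ({b1,b2} = {\<alpha>,\<beta>})" for \<alpha> \<beta>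
  proof -
    have "\<alpha> \<noteq> \<beta> \<longrightarrow> \<not> {a1,a2} \<subseteq> {\<alpha>,\<beta>}" using h(4) sub[OF assms(3)] by simp
    moreover have "\<alpha> \<noteq> \<beta> \<longrightarrow> \<not> {b1,b2} \<subseteq> {\<alpha>,\<beta>}" using h(5) sub[OF assms(4)] by simp
    ultimately show ?thesis using h(1,2,3) by (intro bexI[OF _ h(1)] bexI[OF _ h(2)]) simp
  qed
  ultimately show ?thesis
    apply (elim disjE conjE)
       apply (rule key[of u1 w1]; simp)
      apply (rule key[of u1 w2]; simp)
     apply (rule key[of u2 w1]; simp)
    apply (rule key[of u2 w2]; simp)
    done
qed


lemma two_choosable:
  assumes n2: "n \<ge> 2" and ev: "even n" and mL: "m_assignment (theta_V 2 2 n) 2 L"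
  shows "L_colorings (theta_V 2 2 n) (theta_E 2 2 n) L \<noteq> {}"
proof -
  define V where "V = theta_V 2 2 n"
  have inV: "(0,0) \<in> V" "(0,1) \<in> V" "(1,1) \<in> V" "(2,1) \<in> V" "\<And>j. 0 < j \<Longrightarrow> j < n \<Longrightarrow> (3,j) \<in> V"
    unfolding V_def using theta_V_iff[OF n2] by auto
  have c2: "x \<in> V \<Longrightarrow> finite (L x) \<and> card (L x) = 2" for x
    using mL unfolding m_assignment_def V_def by auto
  define Ls where "Ls j = L (3,j)" for j
  have fin: "\<forall>i. 0 < i \<and> i \<le> n - 1 \<longrightarrow> finite (Ls i) \<and> card (Ls i) = 2"
    using c2 inV(5) unfolding Ls_def by auto
  obtain u1 u2 where u: "u1 \<noteq> u2" "L (0,0) = {u1,u2}" using c2[OF inV(1)] card2E by metis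
  obtain w1 w2 where w: "w1 \<noteq> w2" "L (0,1) = {w1,w2}" using c2[OF inV(2)] card2E by metis
  obtain a1 a2 where a: "a1 \<noteq> a2" "L (1,1) = {a1,a2}" using c2[OF inV(3)] card2E by metis
  obtain b1 b2 where b: "b1 \<noteq> b2" "L (2,1) = {b1,b2}" using c2[OF inV(4)] card2E by metis
  define P where "P x y \<longleftrightarrow> Sreach Ls x (n-1) = {y}" for x y
  have Pf: "\<And>x y z. P x y \<Longrightarrow> P x z \<Longrightarrow> y = z" unfolding P_def by auto
  have Ps: "y = u2 \<and> z = u1" if "P u1 y" "P u2 z" for y z
  proof -
    have "odd (n-1)" using ev n2 by auto
    have s: "Sreach Ls u1 (n-1) = {y}" "Sreach Ls u2 (n-1) = {z}" using that unfolding P_def by auto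
    have "Sreach Ls u1 (n-1) = {u2}" "Sreach Ls u2 (n-1) = {u1}"
      using S_swap[OF fin u(1) s, of "n-1"] \<open>odd (n-1)\<close> by simp_all
    then show ?thesis using s by simp
  qed
  have ex: "\<exists>\<alpha>\<in>{u1,u2}. \<exists>\<beta>\<in>{w1,w2}. \<not> P \<alpha> \<beta> \<and> (\<alpha> \<noteq> \<beta> \<longrightarrow> \<not> {a1,a2} \<subseteq> {\<alpha>,\<beta>}) \<and> (\<alpha> \<noteq> \<beta> \<longrightarrow> \<not> {b1,b2} \<subseteq> {\<alpha>,\<beta>})"
    apply (rule pick[where P=P])
         apply (rule u(1))
        apply (rule w(1))
       apply (rule a(1))
      apply (rule b(1))
     apply (erule (1) Pf)
    apply (erule (1) Ps)
    done
  obtain \<alpha> \<beta> where ab: "\<alpha> \<in> {u1,u2}" "\<beta> \<in> {w1,w2}" "\<not> P \<alpha> \<beta>"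
    "\<alpha> \<noteq> \<beta> \<longrightarrow> \<not> {a1,a2} \<subseteq> {\<alpha>,\<beta>}" "\<alpha> \<noteq> \<beta> \<longrightarrow> \<not> {b1,b2} \<subseteq> {\<alpha>,\<beta>}"
    using ex by (elim bexE conjE) (rule that, assumption+)
  have "Sreach Ls \<alpha> (n-1) \<noteq> {}" using S_ne[of "n-1" Ls \<alpha>] fin by auto
  then obtain d where d: "d \<in> Sreach Ls \<alpha> (n-1)" "d \<noteq> \<beta>" using ab(3) unfolding P_def by blast
  obtain g where g: "g 0 = \<alpha>" "g (n-1) = d" "\<forall>i. 0 < i \<and> i \<le> n-1 \<longrightarrow> g i \<in> Ls i"
    "\<forall>i<n-1. g i \<noteq> g (Suc i)" using S_reach[OF d(1)] by blast
  have "\<exists>c\<in>{a1,a2}. c \<noteq> \<alpha> \<and> c \<noteq> \<beta>" using ab(4) a(1) by (cases "\<alpha> = \<beta>") auto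
  then obtain ca where ca: "ca \<in> L (1,1)" "ca \<noteq> \<alpha>" "ca \<noteq> \<beta>" using a(2) by auto
  have "\<exists>c\<in>{b1,b2}. c \<noteq> \<alpha> \<and> c \<noteq> \<beta>" using ab(5) b(1) by (cases "\<alpha> = \<beta>") auto
  then obtain cb where cb: "cb \<in> L (2,1)" "cb \<noteq> \<alpha>" "cb \<noteq> \<beta>" using b(2) by auto
  define f where "f x = (if x = (0,0) then \<alpha> else if x = (0,1) then \<beta> else if x = (1,1) then ca
     else if x = (2,1) then cb else if x \<in> V then g (snd x) else undefined)" for x
  have fq: "f (path_vx n 3 j) = g j" if "j < n" for j
  proof (cases "j = 0")
    case True then show ?thesis using g(1) by (simp add: f_def path_vx_def)
  next
    case False
    then have "(3,j) \<in> V" using inV(5) that by auto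
    then show ?thesis using False that by (simp add: f_def path_vx_def)
  qed
  have fn: "f (path_vx n 3 n) = \<beta>" using n2 by (simp add: f_def path_vx_def)
  have "f \<in> PiE V L"
  proof (rule PiE_I)
    fix x assume "x \<in> V"
    then have "x = (0,0) \<or> x = (0,1) \<or> x = (1,1) \<or> x = (2,1) \<or> (\<exists>j. 0 < j \<and> j < n \<and> x = (3,j))"
      using theta_V_iff[OF n2] unfolding V_def by auto
    then show "f x \<in> L x"
    proof (elim disjE exE conjE)
      fix j assume j: "0 < j" "j < n" "x = (3,j)"
      then have "g j \<in> Ls j" using g(3) by auto
      then show ?thesis using j inV(5)[OF j(1,2)] by (simp add: f_def Ls_def)
    qed (use ab u w ca cb in \<open>auto simp: f_def\<close>)
  next
    fix x assume "x \<notin> V" then show "f x = undefined" using inV by (auto simp: f_def)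
  qed
  moreover have "proper_coloring V (theta_E 2 2 n) f"
    unfolding proper_theta[OF n2]
  proof (intro conjI allI impI)
    fix j assume j: "j < n"
    show "f (path_vx n 3 j) \<noteq> f (path_vx n 3 (Suc j))"
    proof (cases "Suc j = n")
      case True
      then show ?thesis using fq[OF j] fn g(2) d(2) by (metis diff_Suc_1)
    next
      case False
      then show ?thesis using fq[OF j] fq[of "Suc j"] j g(4) by auto
    qed
  qed (use ca cb in \<open>auto simp: f_def\<close>)
  ultimately show ?thesis unfolding L_colorings_def V_def by blast
qed


lemma q_in: "n \<ge> 2 \<Longrightarrow> j \<le> n \<Longrightarrow> path_vx n 3 j \<in> theta_V 2 2 n"
  unfolding theta_V_iff path_vx_def by auto

lemma finite_theta: "n \<ge> 2 \<Longrightarrow> finite (theta_V 2 2 n)"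
proof -
  assume n2: "n \<ge> 2"
  have "theta_V 2 2 n \<subseteq> {(0,0),(0,1),(1,1),(2,1)} \<union> Pair 3 ` {..<n}"
  proof
    fix x assume "x \<in> theta_V 2 2 n"
    then have "x = (0,0) \<or> x = (0,1) \<or> x = (1,1) \<or> x = (2,1) \<or> (\<exists>j. 0 < j \<and> j < n \<and> x = (3,j))"
      using theta_V_iff[OF n2] by blast
    then show "x \<in> {(0,0),(0,1),(1,1),(2,1)} \<union> Pair 3 ` {..<n}"
      by (elim disjE exE conjE) simp_all
  qed
  moreover have "finite ({(0,0),(0,1),(1,1),(2,1)} \<union> Pair 3 ` {..<n})" by simp
  ultimately show ?thesis by (rule finite_subset)
qed

definition c2 :: "nat \<times> nat \<Rightarrow> nat" where
  "c2 x = (if x = (1,1) \<or> x = (2,1) then 1 else if fst x = 3 then snd x mod 2 else 0)"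

lemma c2_q: "even n \<Longrightarrow> j \<le> n \<Longrightarrow> c2 (path_vx n 3 j) = (if j = 0 \<or> j = n then 0 else j mod 2)"
  by (auto simp: c2_def path_vx_def)

lemma c2_lt: "c2 x < 2" by (auto simp: c2_def)

lemma c2_proper:
  assumes n2: "n \<ge> 2" and ev: "even n"
  shows "proper_coloring V (theta_E 2 2 n) c2"
  unfolding proper_theta[OF n2]
proof (intro conjI allI impI)
  fix j assume j: "j < n"
  show "c2 (path_vx n 3 j) \<noteq> c2 (path_vx n 3 (Suc j))"
    using c2_q[OF ev, of j] c2_q[OF ev, of "Suc j"] j ev n2
    by (auto simp: mod_Suc)
qed (auto simp: c2_def)

lemma chrom_2:
  assumes n2: "n \<ge> 2" and ev: "even n"
  shows "chromatic_number (theta_V 2 2 n) (theta_E 2 2 n) = 2"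
  unfolding chromatic_number_def
proof (rule Least_equality)
  show "\<exists>f. f ` theta_V 2 2 n \<subseteq> {..<2} \<and> proper_coloring (theta_V 2 2 n) (theta_E 2 2 n) f"
    using c2_proper[OF n2 ev] c2_lt by blast
next
  fix m assume "\<exists>f. f ` theta_V 2 2 n \<subseteq> {..<m} \<and> proper_coloring (theta_V 2 2 n) (theta_E 2 2 n) f"
  then obtain f where f: "f ` theta_V 2 2 n \<subseteq> {..<m}" "proper_coloring (theta_V 2 2 n) (theta_E 2 2 n) f" by blast
  have "(0,0) \<in> theta_V 2 2 n" "(1,1) \<in> theta_V 2 2 n" using theta_V_iff[OF n2] by auto
  then have "f (0,0) < m" "f (1,1) < m" using f(1) by auto
  moreover have "f (0,0) \<noteq> f (1,1)" using f(2) unfolding proper_theta[OF n2] by auto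
  ultimately show "2 \<le> m" by linarith
qed

lemma not_choosable0:
  assumes n2: "n \<ge> 2"
  shows "\<not> choosable (theta_V 2 2 n) (theta_E 2 2 n) 0"
proof -
  have "(0,0) \<in> theta_V 2 2 n" using theta_V_iff[OF n2] by auto
  then have "L_colorings (theta_V 2 2 n) (theta_E 2 2 n) (\<lambda>_. {}) = {}"
    unfolding L_colorings_def by auto
  moreover have "m_assignment (theta_V 2 2 n) 0 (\<lambda>_. {})" by (simp add: m_assignment_def)
  ultimately show ?thesis unfolding choosable_def by blast
qed

lemma not_choosable1:
  assumes n2: "n \<ge> 2"
  shows "\<not> choosable (theta_V 2 2 n) (theta_E 2 2 n) 1"
proof -
  have i: "(0,0) \<in> theta_V 2 2 n" "(1,1) \<in> theta_V 2 2 n" using theta_V_iff[OF n2] by auto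
  have "L_colorings (theta_V 2 2 n) (theta_E 2 2 n) (\<lambda>_. {0}) = {}"
  proof (rule ccontr)
    assume "L_colorings (theta_V 2 2 n) (theta_E 2 2 n) (\<lambda>_. {0}) \<noteq> {}"
    then obtain f where "f \<in> PiE (theta_V 2 2 n) (\<lambda>_. {0})" "proper_coloring (theta_V 2 2 n) (theta_E 2 2 n) f"
      unfolding L_colorings_def by blast
    then show False using i unfolding proper_theta[OF n2] by (auto simp: PiE_iff)
  qed
  moreover have "m_assignment (theta_V 2 2 n) 1 (\<lambda>_. {0})" by (simp add: m_assignment_def)
  ultimately show ?thesis unfolding choosable_def by blast
qed

lemma list_chrom_2:
  assumes n2: "n \<ge> 2" and ev: "even n"
  shows "list_chromatic_number (theta_V 2 2 n) (theta_E 2 2 n) = 2"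
  unfolding list_chromatic_number_def
proof (rule Least_equality)
  show "choosable (theta_V 2 2 n) (theta_E 2 2 n) 2"
    unfolding choosable_def using two_choosable[OF n2 ev] by blast
next
  fix m assume "choosable (theta_V 2 2 n) (theta_E 2 2 n) m"
  then show "2 \<le> m" using not_choosable0[OF n2] not_choosable1[OF n2]
    by (metis One_nat_def less_2_cases not_le)
qed

lemma chrom_poly_ge:
  assumes n2: "n \<ge> 2" and ev: "even n"
  shows "chrom_poly (theta_V 2 2 n) (theta_E 2 2 n) 2 \<ge> 2"
proof -
  define V where "V = theta_V 2 2 n"
  define S where "S = L_colorings V (theta_E 2 2 n) (\<lambda>_. {..<2})"
  define h1 where "h1 = restrict c2 V"
  define h2 where "h2 = restrict (\<lambda>x. 1 - c2 x) V"
  have i: "(0,0) \<in> V" "(0,1) \<in> V" "(1,1) \<in> V" "(2,1) \<in> V"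
    unfolding V_def using theta_V_iff[OF n2] by auto
  have qV: "\<And>j. j \<le> n \<Longrightarrow> path_vx n 3 j \<in> V" unfolding V_def using q_in[OF n2] by auto
  have fS: "finite S"
  proof -
    have "finite (PiE V (\<lambda>_. {..<2::nat}))" by (rule finite_PiE) (auto simp: V_def finite_theta[OF n2])
    moreover have "S \<subseteq> PiE V (\<lambda>_. {..<2::nat})" unfolding S_def L_colorings_def by blast
    ultimately show ?thesis by (rule finite_subset[rotated])
  qed
  have rp: "proper_coloring V (theta_E 2 2 n) (restrict g V)" if pg: "proper_coloring V (theta_E 2 2 n) g" for g :: "nat \<times> nat \<Rightarrow> nat"
  proof -
    have pg': "g (0,0) \<noteq> g (1,1)" "g (1,1) \<noteq> g (0,1)" "g (0,0) \<noteq> g (2,1)" "g (2,1) \<noteq> g (0,1)"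
      "\<forall>j<n. g (path_vx n 3 j) \<noteq> g (path_vx n 3 (Suc j))"
      using pg unfolding proper_theta[OF n2] by blast+
    show ?thesis
      unfolding proper_theta[OF n2]
    proof (intro conjI allI impI)
      fix j assume j: "j < n"
      have "path_vx n 3 j \<in> V" "path_vx n 3 (Suc j) \<in> V" using qV j by auto
      moreover have "g (path_vx n 3 j) \<noteq> g (path_vx n 3 (Suc j))" using pg'(5) j by blast
      ultimately show "restrict g V (path_vx n 3 j) \<noteq> restrict g V (path_vx n 3 (Suc j))" by simp
    qed (use pg'(1-4) i in simp_all)
  qed
  have p1: "proper_coloring V (theta_E 2 2 n) h1"
    using rp[OF c2_proper[OF n2 ev]] unfolding h1_def .
  have p2: "proper_coloring V (theta_E 2 2 n) h2"
  proof -
    have inj: "c2 x \<noteq> c2 y \<Longrightarrow> 1 - c2 x \<noteq> 1 - c2 y" for x y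
      using c2_lt[of x] c2_lt[of y] by linarith
    have "proper_coloring V (theta_E 2 2 n) (\<lambda>x. 1 - c2 x)"
      using c2_proper[OF n2 ev, of V] unfolding proper_theta[OF n2]
      using inj by blast
    from rp[OF this] show ?thesis unfolding h2_def .
  qed
  have "h1 \<in> S" "h2 \<in> S" unfolding S_def L_colorings_def h1_def h2_def
    using p1 p2 c2_lt unfolding h1_def h2_def by auto
  moreover have "h1 \<noteq> h2"
  proof
    assume "h1 = h2" then have "h1 (0,0) = h2 (0,0)" by simp
    then show False using i by (simp add: h1_def h2_def c2_def)
  qed
  ultimately have "card {h1,h2} \<le> card S" using fS by (intro card_mono) auto
  then show ?thesis using \<open>h1 \<noteq> h2\<close> unfolding chrom_poly_def P_list_def S_def V_def
    by (simp add: lessThan_def)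
qed


definition L0 :: "nat \<Rightarrow> nat \<times> nat \<Rightarrow> nat set" where
  "L0 n x = (if x = (0,0) then {0,1} else if x = (0,1) then {0,2} else if x = (1,1) then {0,1}
     else if x = (2,1) then {1,2} else if x = (3,1) then {0,1} else if x = (3,n-1) then {0,2} else {1,2})"

definition val0 :: "nat \<Rightarrow> nat \<times> nat \<Rightarrow> nat" where
  "val0 n x = (if x = (0,0) then 0 else if x = (0,1) then 2 else if x = (1,1) then 1 else if x = (2,1) then 1
     else if x = (3,n-1) then 0 else if even (snd x) then 2 else 1)"

lemma L0_unique:
  assumes n4: "n \<ge> 4" and ev: "even n"
    and f: "f \<in> L_colorings (theta_V 2 2 n) (theta_E 2 2 n) (L0 n)"
    and x: "x \<in> theta_V 2 2 n"
  shows "f x = val0 n x"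
proof -
  have n2: "n \<ge> 2" using n4 by simp
  have inV: "(0,0) \<in> theta_V 2 2 n" "(0,1) \<in> theta_V 2 2 n" "(1,1) \<in> theta_V 2 2 n" "(2,1) \<in> theta_V 2 2 n"
    "\<And>j. 0 < j \<Longrightarrow> j < n \<Longrightarrow> (3,j) \<in> theta_V 2 2 n"
    using theta_V_iff[OF n2] by auto
  have fL: "\<And>y. y \<in> theta_V 2 2 n \<Longrightarrow> f y \<in> L0 n y" and pr: "proper_coloring (theta_V 2 2 n) (theta_E 2 2 n) f"
    using f unfolding L_colorings_def by (auto simp: PiE_iff)
  have pq: "\<And>j. j < n \<Longrightarrow> f (path_vx n 3 j) \<noteq> f (path_vx n 3 (Suc j))"
    and e1: "f (0,0) \<noteq> f (1,1)" and e2: "f (1,1) \<noteq> f (0,1)" and e3: "f (0,0) \<noteq> f (2,1)"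
    and e4: "f (2,1) \<noteq> f (0,1)"
    using pr unfolding proper_theta[OF n2] by auto
  have m1: "f (0,0) \<in> {0,1}" using fL[OF inV(1)] by (simp add: L0_def)
  have m2: "f (0,1) \<in> {0,2}" using fL[OF inV(2)] by (simp add: L0_def)
  have m3: "f (1,1) \<in> {0,1}" using fL[OF inV(3)] by (simp add: L0_def)
  have m4: "f (2,1) \<in> {1,2}" using fL[OF inV(4)] by (simp add: L0_def)
  have m5: "f (3,1) \<in> {0,1}" using fL[OF inV(5)[of 1]] n4 by (simp add: L0_def)
  have "L0 n (3, n-1) = {0,2}"
  proof -
    have "n - 1 \<noteq> 1" using n4 by simp
    then have "(3::nat, n - 1) \<noteq> (3, 1)" by simp
    then show ?thesis unfolding L0_def by (simp only: if_False if_True prod.inject refl simp_thms) simp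
  qed
  then have m6: "f (3,n-1) \<in> {0,2}" using fL[OF inV(5)[of "n-1"]] n4 by simp
  have m7: "f (3,j) \<in> {1,2}" if "1 < j" "j < n - 1" for j
    using fL[OF inV(5)[of j]] that by (simp add: L0_def)
  have u0: "f (0,0) = 0" using m1 m2 m3 m4 e1 e2 e3 e4 by auto
  have p1: "f (3,1) \<noteq> f (0,0)" using pq[of 0] n4 by (simp add: path_vx_def)
  have pj: "f (3,j) \<noteq> f (3, Suc j)" if "0 < j" "Suc j < n" for j
    using pq[of j] that by (simp add: path_vx_def)
  have pl: "f (3, n-1) \<noteq> f (0,1)"
  proof -
    have a: "path_vx n 3 (n-1) = (3, n-1)" using n4 by (simp add: path_vx_def)
    have b: "Suc (n-1) = n" using n4 by simp
    have c: "path_vx n 3 n = (0,1)" using n4 by (simp add: path_vx_def)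
    have "n - 1 < n" using n4 by simp
    from pq[OF this] show ?thesis unfolding b a c .
  qed
  have mid: "f (3,j) = (if even j then 2 else 1)" if "0 < j" "j \<le> n - 2" for j
    using that
  proof (induction j)
    case 0 then show ?case by simp
  next
    case (Suc j)
    show ?case
    proof (cases "j = 0")
      case True then show ?thesis using m5 p1 u0 by auto
    next
      case False
      then have "f (3,j) = (if even j then 2 else 1)" using Suc by auto
      moreover have "f (3, Suc j) \<in> {1,2}" using m7[of "Suc j"] Suc.prems False by auto
      moreover have "f (3,j) \<noteq> f (3, Suc j)" using pj[of j] False Suc.prems n4 by auto
      ultimately show ?thesis by auto
    qed
  qed
  have "f (3, n-2) = 2" using mid[of "n-2"] n4 ev by auto
  moreover have "f (3, n-2) \<noteq> f (3, n-1)" using pj[of "n-2"] n4 by (simp add: Suc_diff_Suc numeral_2_eq_2)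
  ultimately have l0: "f (3, n-1) = 0" using m6 by auto
  have w2: "f (0,1) = 2" using m2 pl l0 by auto
  have a1: "f (1,1) = 1" using m3 e1 u0 by auto
  have b1: "f (2,1) = 1" using m4 e4 w2 by auto
  have "x = (0,0) \<or> x = (0,1) \<or> x = (1,1) \<or> x = (2,1) \<or> (\<exists>j. 0 < j \<and> j < n \<and> x = (3,j))"
    using x theta_V_iff[OF n2] by auto
  then show ?thesis
  proof (elim disjE exE conjE)
    fix j assume j: "0 < j" "j < n" "x = (3,j)"
    show ?thesis
    proof (cases "j = n - 1")
      case True then show ?thesis using j l0 by (simp add: val0_def)
    next
      case False
      then have "j \<le> n - 2" using j by auto
      then show ?thesis using mid[of j] j False by (simp add: val0_def)
    qed
  qed (use u0 w2 a1 b1 in \<open>simp_all add: val0_def\<close>)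
qed

lemma lcf_le:
  assumes n4: "n \<ge> 4" and ev: "even n"
  shows "list_color_function (theta_V 2 2 n) (theta_E 2 2 n) 2 \<le> 1"
proof -
  let ?S = "L_colorings (theta_V 2 2 n) (theta_E 2 2 n) (L0 n)"
  have ma: "m_assignment (theta_V 2 2 n) 2 (L0 n)"
    unfolding m_assignment_def L0_def by auto
  have eq: "f1 = f2" if "f1 \<in> ?S" "f2 \<in> ?S" for f1 f2
  proof
    fix x show "f1 x = f2 x"
    proof (cases "x \<in> theta_V 2 2 n")
      case True then show ?thesis using L0_unique[OF n4 ev] that by metis
    next
      case False
      have "f1 \<in> PiE (theta_V 2 2 n) (L0 n)" "f2 \<in> PiE (theta_V 2 2 n) (L0 n)"
        using that unfolding L_colorings_def by auto
      then show ?thesis using PiE_arb False by metis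
    qed
  qed
  have "P_list (theta_V 2 2 n) (theta_E 2 2 n) (L0 n) \<le> 1"
    unfolding P_list_def
  proof (cases "finite ?S")
    case True then show "card ?S \<le> 1" using eq card_le_Suc0_iff_eq by (metis One_nat_def)
  qed simp
  moreover have "list_color_function (theta_V 2 2 n) (theta_E 2 2 n) 2 \<le> P_list (theta_V 2 2 n) (theta_E 2 2 n) (L0 n)"
    unfolding list_color_function_def by (rule Least_le) (use ma in blast)
  ultimately show ?thesis by linarith
qed

theorem lemma13:
  fixes k :: nat
  assumes "k \<ge> 2"
  shows "chromatic_choosable (theta_V 2 2 (2*k)) (theta_E 2 2 (2*k)) \<and>
         \<not> weakly_enum_chromatic_choosable (theta_V 2 2 (2*k)) (theta_E 2 2 (2*k))"
proof -
  have n4: "2*k \<ge> 4" and n2: "2*k \<ge> 2" and ev: "even (2*k)" using assms by auto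
  show ?thesis
    unfolding chromatic_choosable_def weakly_enum_chromatic_choosable_def
    using chrom_2[OF n2 ev] list_chrom_2[OF n2 ev] lcf_le[OF n4 ev] chrom_poly_ge[OF n2 ev]
    by simp
qed

end
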